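(* Let $n\ge1$ and $A=(a_{i,j})\in\Theta_\vartriangle(n)$. Then $$\|A\|=\sum_{1\le i\le n,\ i<j}\sigma_{i,j}(A)+\sum_{1\le i\le n,\ i>j}\sigma_{i,j}(A),$$ where $j$ ranges over $\mathbb Z$. In particular, if $A,B\in\Theta_\vartriangle(n)$ satisfy $A\prec B$, then $\|A\|<\|B\|$.
   Context: $\Theta_\vartriangle(n)$ is the set of matrices $A=(a_{i,j})_{i,j\in\mathbb Z}$ with $a_{i,j}\in\mathbb N$, $a_{i+n,j+n}=a_{i,j}$, and for each $i$ only finitely many nonzero $a_{i,j}$. Define $\|A\|=\sum_{1\le i\le n,\,i<j}\frac{(j-i)(j-i+1)}{2}a_{i,j}+\sum_{1\le i\le n,\,i>j}\frac{(i-j)(i-j+1)}{2}a_{i,j}$. For $i\ne j$ put $\sigma_{i,j}(A)=\sum_{s\le i,\ t\ge j}a_{s,t}$ if $i<j$ and $\sigma_{i,j}(A)=\sum_{s\ge i,\ t\le j}a_{s,t}$ if $i>j$. Write $B\preceq A$ if $\sigma_{i,j}(B)\le\sigma_{i,j}(A)$ for all $i\ne j$, and $B\prec A$ if $B\preceq A$ and $\sigma_{i,j}(B)<\sigma_{i,j}(A)$ for some $i\ne j$. *)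

theory Defs
  imports Main
begin

type_synonym zmat = "int \<Rightarrow> int \<Rightarrow> nat"

text \<open>Sum of a nat-valued function over the (finite) support inside S.
  All sums below are over sets whose support is finite for matrices in Theta.\<close>
definition fsum :: "('a \<Rightarrow> nat) \<Rightarrow> 'a set \<Rightarrow> nat" where
  "fsum f S = (\<Sum>x\<in>{x\<in>S. f x \<noteq> 0}. f x)"

definition Theta :: "nat \<Rightarrow> zmat set" where
  "Theta n = {A. (\<forall>i j. A (i + int n) (j + int n) = A i j) \<and>
                 (\<forall>i. finite {j. A i j \<noteq> 0})}"

definition tnorm :: "nat \<Rightarrow> zmat \<Rightarrow> nat" where
  "tnorm n A =
     fsum (\<lambda>(i, j). (nat (j - i) * (nat (j - i) + 1) div 2) * A i j)
          {(i, j). 1 \<le> i \<and> i \<le> int n \<and> i < j}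
   + fsum (\<lambda>(i, j). (nat (i - j) * (nat (i - j) + 1) div 2) * A i j)
          {(i, j). 1 \<le> i \<and> i \<le> int n \<and> i > j}"

definition sigma :: "zmat \<Rightarrow> int \<Rightarrow> int \<Rightarrow> nat" where
  "sigma A i j =
     (if i < j then fsum (\<lambda>(s, t). A s t) {(s, t). s \<le> i \<and> j \<le> t}
      else if j < i then fsum (\<lambda>(s, t). A s t) {(s, t). i \<le> s \<and> t \<le> j}
      else 0)"

definition preceq :: "zmat \<Rightarrow> zmat \<Rightarrow> bool" where
  "preceq B A \<longleftrightarrow> (\<forall>i j. i \<noteq> j \<longrightarrow> sigma B i j \<le> sigma A i j)"

definition prec :: "zmat \<Rightarrow> zmat \<Rightarrow> bool" where
  "prec B A \<longleftrightarrow> preceq B A \<and> (\<exists>i j. i \<noteq> j \<and> sigma B i j < sigma A i j)"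

end

theory Submission
  imports Defs
begin

lemma fsum_eq_sum:
  assumes "finite T" "T \<subseteq> S" "\<And>x. x \<in> S \<Longrightarrow> f x \<noteq> 0 \<Longrightarrow> x \<in> T"
  shows "fsum f S = sum f T"
  unfolding fsum_def
  by (rule sum.mono_neutral_left) (use assms in auto)

lemma fsum_nz: "fsum f S \<noteq> 0 \<Longrightarrow> \<exists>x\<in>S. f x \<noteq> 0"
  unfolding fsum_def by (metis (mono_tags, lifting) empty_Collect_eq sum.empty)

lemma per_mult:
  assumes "X \<in> Theta n"
  shows "X (i + k * int n) (j + k * int n) = X i j"
proof -
  have per: "\<And>i j. X (i + int n) (j + int n) = X i j" using assms by (simp add: Theta_def)
  show ?thesis
  proof (induction k rule: int_induct[where k=0])
    case base then show ?case by simp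
  next
    case (step1 k)
    have "X (i + (k+1) * int n) (j + (k+1) * int n) = X ((i + k * int n) + int n) ((j + k * int n) + int n)"
      by (simp add: algebra_simps)
    also have "\<dots> = X i j" using per step1 by simp
    finally show ?case .
  next
    case (step2 k)
    have "X (i + k * int n) (j + k * int n) = X ((i + (k - 1) * int n) + int n) ((j + (k-1) * int n) + int n)"
      by (simp add: algebra_simps)
    also have "\<dots> = X (i + (k - 1) * int n) (j + (k-1) * int n)" using per by simp
    finally show ?case using step2 by simp
  qed
qed

lemma band_exists:
  assumes "X \<in> Theta n" "n \<ge> 1"
  shows "\<exists>M. \<forall>i j. X i j \<noteq> 0 \<longrightarrow> \<bar>j - i\<bar> \<le> int M"
proof -
  define F where "F = Sigma {1..int n} (\<lambda>r. {j. X r j \<noteq> 0})"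
  have fin: "finite F" unfolding F_def using assms(1) by (auto simp: Theta_def)
  define M where "M = Max (insert 0 ((\<lambda>(r,j). nat \<bar>j - r\<bar>) ` F))"
  have Mge: "\<And>r j. (r,j) \<in> F \<Longrightarrow> nat \<bar>j - r\<bar> \<le> M"
    unfolding M_def using fin by (intro Max_ge) auto
  have "\<forall>i j. X i j \<noteq> 0 \<longrightarrow> \<bar>j - i\<bar> \<le> int M"
  proof (intro allI impI)
    fix i j assume nz: "X i j \<noteq> 0"
    define q where "q = (i - 1) div int n"
    define r where "r = (i - 1) mod int n + 1"
    have ir: "i = r + q * int n" unfolding q_def r_def
      using div_mult_mod_eq[of "i - 1" "int n"] by linarith
    have np: "0 < int n" using assms(2) by simp
    have r1: "1 \<le> r" "r \<le> int n" unfolding r_def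
      using pos_mod_bound[OF np, of "i - 1"] pos_mod_sign[OF np, of "i - 1"] by linarith+
    have "X i j = X (r + q * int n) ((j - q * int n) + q * int n)" using ir by simp
    also have "\<dots> = X r (j - q * int n)" by (rule per_mult[OF assms(1)])
    finally have "X r (j - q * int n) \<noteq> 0" using nz by simp
    hence "(r, j - q * int n) \<in> F" unfolding F_def using r1 by auto
    from Mge[OF this] have "nat \<bar>j - q * int n - r\<bar> \<le> M" .
    thus "\<bar>j - i\<bar> \<le> int M" using ir by (simp add: algebra_simps)
  qed
  thus ?thesis by blast
qed

lemma window:
  fixes \<psi> :: "int \<Rightarrow> nat"
  assumes per: "\<And>x. \<psi> (x + int n) = \<psi> x"
  shows "(\<Sum>k<n. \<psi> (a + int k)) = (\<Sum>k<n. \<psi> (b + int k))"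
proof (cases n)
  case 0 then show ?thesis by simp
next
  case (Suc m)
  define g where "g a = (\<Sum>k<n. \<psi> (a + int k))" for a
  have step: "g (a + 1) = g a" for a
  proof -
    have "g a = \<psi> a + (\<Sum>k<m. \<psi> (a + int (Suc k)))"
      unfolding g_def Suc sum.lessThan_Suc_shift by simp
    moreover have "g (a+1) = (\<Sum>k<m. \<psi> (a + int (Suc k))) + \<psi> (a + int n)"
      unfolding g_def Suc sum.lessThan_Suc by (simp add: algebra_simps)
    ultimately show ?thesis using per[of a] by simp
  qed
  have "g x = g 0" for x
  proof (induction x rule: int_induct[where k=0])
    case base then show ?case by simp
  next
    case (step1 i) then show ?case using step by simp
  next
    case (step2 i) then show ?case using step[of "i - 1"] by simp
  qed
  then show ?thesis unfolding g_def by metis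
qed

lemma tri: "(c::nat) \<le> M \<Longrightarrow> (\<Sum>e\<le>M. c - e) = c * (c + 1) div 2"
proof (induction M arbitrary: c)
  case 0 then show ?case by simp
next
  case (Suc M)
  show ?case
  proof (cases "c \<le> M")
    case True then show ?thesis using Suc by simp
  next
    case False
    hence c: "c = Suc M" using Suc by simp
    have "(\<Sum>e\<le>Suc M. c - e) = c + (\<Sum>e\<le>M. M - e)"
      unfolding sum.atMost_Suc_shift c by simp
    also have "\<dots> = c + M * (M + 1) div 2" using Suc.IH by simp
    finally show ?thesis using c by simp
  qed
qed

lemma count:
  fixes c :: int and x :: nat
  assumes "1 \<le> c" "c \<le> int M"
  shows "(\<Sum>d\<in>{1..int M}. if d \<le> c - int e then x else 0) = (nat c - e) * x"
proof -
  have "(\<Sum>d\<in>{1..int M}. if d \<le> c - int e then x else 0) = (\<Sum>d\<in>{d\<in>{1..int M}. d \<le> c - int e}. x)"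
    by (simp add: sum.inter_filter[symmetric])
  also have "{d\<in>{1..int M}. d \<le> c - int e} = {1..c - int e}" using assms by auto
  also have "(\<Sum>d\<in>{1..c - int e}. x) = (nat c - e) * x" using assms by (simp add: nat_diff_distrib')
  finally show ?thesis .
qed


lemma core:
  fixes \<phi> :: "int \<Rightarrow> int \<Rightarrow> nat" and \<sigma> :: "nat \<Rightarrow> int"
  assumes per: "\<And>s c. \<phi> (s + int n) c = \<phi> s c"
  shows "(\<Sum>k<n. \<Sum>d\<in>{1..int M}. \<Sum>e\<le>M. \<Sum>c\<in>{1..int M}.
            (if d \<le> c - int e then \<phi> (1 + int k + \<sigma> e) c else 0))
       = (\<Sum>k<n. \<Sum>c\<in>{1..int M}. (nat c * (nat c + 1) div 2) * \<phi> (1 + int k) c)"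
proof -
  have "(\<Sum>k<n. \<Sum>d\<in>{1..int M}. \<Sum>e\<le>M. \<Sum>c\<in>{1..int M}.
            (if d \<le> c - int e then \<phi> (1 + int k + \<sigma> e) c else 0))
      = (\<Sum>k<n. \<Sum>e\<le>M. \<Sum>c\<in>{1..int M}. \<Sum>d\<in>{1..int M}.
            (if d \<le> c - int e then \<phi> (1 + int k + \<sigma> e) c else 0))"
    apply (rule sum.cong[OF refl])
    apply (rule trans[OF sum.swap])
    apply (rule sum.cong[OF refl])
    by (rule sum.swap)
  also have "\<dots> = (\<Sum>k<n. \<Sum>e\<le>M. \<Sum>c\<in>{1..int M}. (nat c - e) * \<phi> (1 + int k + \<sigma> e) c)"
    by (intro sum.cong refl count) auto
  also have "\<dots> = (\<Sum>e\<le>M. \<Sum>c\<in>{1..int M}. (nat c - e) * (\<Sum>k<n. \<phi> (1 + int k + \<sigma> e) c))"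
    apply (rule trans[OF sum.swap])
    apply (rule sum.cong[OF refl])
    apply (rule trans[OF sum.swap])
    by (simp add: sum_distrib_left)
  also have "\<dots> = (\<Sum>e\<le>M. \<Sum>c\<in>{1..int M}. (nat c - e) * (\<Sum>k<n. \<phi> (1 + int k) c))"
  proof (rule sum.cong[OF refl], rule sum.cong[OF refl])
    fix e c
    have "(\<Sum>k<n. \<phi> ((1 + \<sigma> e) + int k) c) = (\<Sum>k<n. \<phi> (1 + int k) c)"
      by (rule window) (rule per)
    thus "(nat c - e) * (\<Sum>k<n. \<phi> (1 + int k + \<sigma> e) c) = (nat c - e) * (\<Sum>k<n. \<phi> (1 + int k) c)"
      by (simp add: algebra_simps)
  qed
  also have "\<dots> = (\<Sum>k<n. \<Sum>c\<in>{1..int M}. (\<Sum>e\<le>M. nat c - e) * \<phi> (1 + int k) c)"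
    unfolding sum_distrib_left sum_distrib_right
    apply (rule trans[OF sum.swap])
    apply (rule trans[OF sum.cong[OF refl sum.swap]])
    apply (rule trans[OF sum.swap])
    by (simp add: mult_ac)
  also have "\<dots> = (\<Sum>k<n. \<Sum>c\<in>{1..int M}. (nat c * (nat c + 1) div 2) * \<phi> (1 + int k) c)"
    by (intro sum.cong refl arg_cong2[where f="(*)"] tri) auto
  finally show ?thesis .
qed


lemma sig_up:
  assumes band: "\<And>i j. X i j \<noteq> 0 \<Longrightarrow> \<bar>j - i\<bar> \<le> int M" and d: "1 \<le> d"
  shows "sigma X i (i + d) = (\<Sum>e\<le>M. \<Sum>c\<in>{1..int M}.
            if d \<le> c - int e then X (i - int e) (i - int e + c) else 0)"
proof -
  define P where "P = (\<lambda>(e::nat, c::int). (i - int e, i - int e + c))"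
  define R where "R = {x \<in> {..M} \<times> {1..int M}. d \<le> snd x - int (fst x)}"
  have inj: "inj_on P R" by (auto simp: inj_on_def P_def)
  have "sigma X i (i + d) = fsum (\<lambda>(s,t). X s t) {(s,t). s \<le> i \<and> i + d \<le> t}"
    unfolding sigma_def using d by simp
  also have "\<dots> = sum (\<lambda>(s,t). X s t) (P ` R)"
  proof (rule fsum_eq_sum)
    show "finite (P ` R)" unfolding R_def by auto
    show "P ` R \<subseteq> {(s,t). s \<le> i \<and> i + d \<le> t}" unfolding R_def P_def by auto
    fix x assume x: "x \<in> {(s,t). s \<le> i \<and> i + d \<le> t}" "(\<lambda>(s,t). X s t) x \<noteq> 0"
    then obtain s t where st: "x = (s,t)" "s \<le> i" "i + d \<le> t" "X s t \<noteq> 0" by auto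
    have b: "\<bar>t - s\<bar> \<le> int M" using band st(4) .
    show "x \<in> P ` R"
      by (rule image_eqI[where x="(nat (i - s), t - s)"]) (use st b d in \<open>auto simp: P_def R_def\<close>)
  qed
  also have "\<dots> = sum ((\<lambda>(s,t). X s t) \<circ> P) R" by (rule sum.reindex[OF inj])
  also have "\<dots> = (\<Sum>x\<in>{..M} \<times> {1..int M}. if d \<le> snd x - int (fst x) then ((\<lambda>(s,t). X s t) \<circ> P) x else 0)"
    unfolding R_def by (rule sum.inter_filter) auto
  also have "\<dots> = (\<Sum>e\<le>M. \<Sum>c\<in>{1..int M}.
            if d \<le> c - int e then X (i - int e) (i - int e + c) else 0)"
    unfolding sum.cartesian_product by (rule sum.cong) (auto simp: P_def)
  finally show ?thesis .
qed

lemma sig_lo: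
  assumes band: "\<And>i j. X i j \<noteq> 0 \<Longrightarrow> \<bar>j - i\<bar> \<le> int M" and d: "1 \<le> d"
  shows "sigma X i (i - d) = (\<Sum>e\<le>M. \<Sum>c\<in>{1..int M}.
            if d \<le> c - int e then X (i + int e) (i + int e - c) else 0)"
proof -
  define P where "P = (\<lambda>(e::nat, c::int). (i + int e, i + int e - c))"
  define R where "R = {x \<in> {..M} \<times> {1..int M}. d \<le> snd x - int (fst x)}"
  have inj: "inj_on P R" by (auto simp: inj_on_def P_def)
  have "sigma X i (i - d) = fsum (\<lambda>(s,t). X s t) {(s,t). i \<le> s \<and> t \<le> i - d}"
    unfolding sigma_def using d by simp
  also have "\<dots> = sum (\<lambda>(s,t). X s t) (P ` R)"
  proof (rule fsum_eq_sum)
    show "finite (P ` R)" unfolding R_def by auto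
    show "P ` R \<subseteq> {(s,t). i \<le> s \<and> t \<le> i - d}" unfolding R_def P_def by auto
    fix x assume x: "x \<in> {(s,t). i \<le> s \<and> t \<le> i - d}" "(\<lambda>(s,t). X s t) x \<noteq> 0"
    then obtain s t where st: "x = (s,t)" "i \<le> s" "t \<le> i - d" "X s t \<noteq> 0" by auto
    have b: "\<bar>t - s\<bar> \<le> int M" using band st(4) .
    show "x \<in> P ` R"
      by (rule image_eqI[where x="(nat (s - i), s - t)"]) (use st b d in \<open>auto simp: P_def R_def\<close>)
  qed
  also have "\<dots> = sum ((\<lambda>(s,t). X s t) \<circ> P) R" by (rule sum.reindex[OF inj])
  also have "\<dots> = (\<Sum>x\<in>{..M} \<times> {1..int M}. if d \<le> snd x - int (fst x) then ((\<lambda>(s,t). X s t) \<circ> P) x else 0)"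
    unfolding R_def by (rule sum.inter_filter) auto
  also have "\<dots> = (\<Sum>e\<le>M. \<Sum>c\<in>{1..int M}.
            if d \<le> c - int e then X (i + int e) (i + int e - c) else 0)"
    unfolding sum.cartesian_product by (rule sum.cong) (auto simp: P_def)
  finally show ?thesis .
qed


lemma fsum_up:
  fixes F :: "int \<Rightarrow> int \<Rightarrow> nat"
  assumes b: "\<And>i j. i < j \<Longrightarrow> F i j \<noteq> 0 \<Longrightarrow> j - i \<le> int M"
  shows "fsum (\<lambda>(i, j). F i j) {(i, j). 1 \<le> i \<and> i \<le> int n \<and> i < j}
       = (\<Sum>k<n. \<Sum>d\<in>{1..int M}. F (1 + int k) (1 + int k + d))"
proof -
  define P where "P = (\<lambda>(k::nat, d::int). (1 + int k, 1 + int k + d))"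
  have inj: "inj_on P ({..<n} \<times> {1..int M})" by (auto simp: inj_on_def P_def)
  have "fsum (\<lambda>(i, j). F i j) {(i, j). 1 \<le> i \<and> i \<le> int n \<and> i < j}
      = sum (\<lambda>(i, j). F i j) (P ` ({..<n} \<times> {1..int M}))"
  proof (rule fsum_eq_sum)
    show "finite (P ` ({..<n} \<times> {1..int M}))" by auto
    show "P ` ({..<n} \<times> {1..int M}) \<subseteq> {(i, j). 1 \<le> i \<and> i \<le> int n \<and> i < j}"
      by (auto simp: P_def)
    fix x assume x: "x \<in> {(i, j). 1 \<le> i \<and> i \<le> int n \<and> i < j}" "(\<lambda>(i, j). F i j) x \<noteq> 0"
    then obtain i j where st: "x = (i,j)" "1 \<le> i" "i \<le> int n" "i < j" "F i j \<noteq> 0" by auto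
    have "j - i \<le> int M" using b st(4,5) .
    show "x \<in> P ` ({..<n} \<times> {1..int M})"
      by (rule image_eqI[where x="(nat (i - 1), j - i)"]) (use st \<open>j - i \<le> int M\<close> in \<open>auto simp: P_def\<close>)
  qed
  also have "\<dots> = sum ((\<lambda>(i, j). F i j) \<circ> P) ({..<n} \<times> {1..int M})" by (rule sum.reindex[OF inj])
  also have "\<dots> = (\<Sum>k<n. \<Sum>d\<in>{1..int M}. F (1 + int k) (1 + int k + d))"
    unfolding sum.cartesian_product by (rule sum.cong) (auto simp: P_def)
  finally show ?thesis .
qed

lemma fsum_lo:
  fixes F :: "int \<Rightarrow> int \<Rightarrow> nat"
  assumes b: "\<And>i j. j < i \<Longrightarrow> F i j \<noteq> 0 \<Longrightarrow> i - j \<le> int M"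
  shows "fsum (\<lambda>(i, j). F i j) {(i, j). 1 \<le> i \<and> i \<le> int n \<and> i > j}
       = (\<Sum>k<n. \<Sum>d\<in>{1..int M}. F (1 + int k) (1 + int k - d))"
proof -
  define P where "P = (\<lambda>(k::nat, d::int). (1 + int k, 1 + int k - d))"
  have inj: "inj_on P ({..<n} \<times> {1..int M})" by (auto simp: inj_on_def P_def)
  have "fsum (\<lambda>(i, j). F i j) {(i, j). 1 \<le> i \<and> i \<le> int n \<and> i > j}
      = sum (\<lambda>(i, j). F i j) (P ` ({..<n} \<times> {1..int M}))"
  proof (rule fsum_eq_sum)
    show "finite (P ` ({..<n} \<times> {1..int M}))" by auto
    show "P ` ({..<n} \<times> {1..int M}) \<subseteq> {(i, j). 1 \<le> i \<and> i \<le> int n \<and> i > j}"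
      by (auto simp: P_def)
    fix x assume x: "x \<in> {(i, j). 1 \<le> i \<and> i \<le> int n \<and> i > j}" "(\<lambda>(i, j). F i j) x \<noteq> 0"
    then obtain i j where st: "x = (i,j)" "1 \<le> i" "i \<le> int n" "j < i" "F i j \<noteq> 0" by auto
    have "i - j \<le> int M" using b st(4,5) .
    show "x \<in> P ` ({..<n} \<times> {1..int M})"
      by (rule image_eqI[where x="(nat (i - 1), i - j)"]) (use st \<open>i - j \<le> int M\<close> in \<open>auto simp: P_def\<close>)
  qed
  also have "\<dots> = sum ((\<lambda>(i, j). F i j) \<circ> P) ({..<n} \<times> {1..int M})" by (rule sum.reindex[OF inj])
  also have "\<dots> = (\<Sum>k<n. \<Sum>d\<in>{1..int M}. F (1 + int k) (1 + int k - d))"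
    unfolding sum.cartesian_product by (rule sum.cong) (auto simp: P_def)
  finally show ?thesis .
qed

lemma sig_band_up:
  assumes band: "\<And>i j. X i j \<noteq> 0 \<Longrightarrow> \<bar>j - i\<bar> \<le> int M" and "i < j" "sigma X i j \<noteq> 0"
  shows "j - i \<le> int M"
proof -
  from assms(2,3) have "fsum (\<lambda>(s, t). X s t) {(s, t). s \<le> i \<and> j \<le> t} \<noteq> 0"
    unfolding sigma_def by simp
  from fsum_nz[OF this] obtain s t where "s \<le> i" "j \<le> t" "X s t \<noteq> 0" by auto
  with band[of s t] show ?thesis by auto
qed

lemma sig_band_lo:
  assumes band: "\<And>i j. X i j \<noteq> 0 \<Longrightarrow> \<bar>j - i\<bar> \<le> int M" and "j < i" "sigma X i j \<noteq> 0"
  shows "i - j \<le> int M"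
proof -
  from assms(2,3) have "fsum (\<lambda>(s, t). X s t) {(s, t). i \<le> s \<and> t \<le> j} \<noteq> 0"
    unfolding sigma_def by simp
  from fsum_nz[OF this] obtain s t where "i \<le> s" "t \<le> j" "X s t \<noteq> 0" by auto
  with band[of s t] show ?thesis by auto
qed


lemma form:
  assumes th: "X \<in> Theta n" and band: "\<And>i j. X i j \<noteq> 0 \<Longrightarrow> \<bar>j - i\<bar> \<le> int M"
  shows "tnorm n X = (\<Sum>k<n. \<Sum>d\<in>{1..int M}. sigma X (1 + int k) (1 + int k + d))
                   + (\<Sum>k<n. \<Sum>d\<in>{1..int M}. sigma X (1 + int k) (1 + int k - d))"
    and "fsum (\<lambda>(i, j). sigma X i j) {(i, j). 1 \<le> i \<and> i \<le> int n \<and> i < j}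
            + fsum (\<lambda>(i, j). sigma X i j) {(i, j). 1 \<le> i \<and> i \<le> int n \<and> i > j}
         = (\<Sum>k<n. \<Sum>d\<in>{1..int M}. sigma X (1 + int k) (1 + int k + d))
                   + (\<Sum>k<n. \<Sum>d\<in>{1..int M}. sigma X (1 + int k) (1 + int k - d))"
proof -
  have per: "\<And>i j. X (i + int n) (j + int n) = X i j" using th by (simp add: Theta_def)
  have perU: "X (s + int n) (s + int n + c) = X s (s + c)" for s c
    using per[of s "s + c"] by (simp add: algebra_simps)
  have perL: "X (s + int n) (s + int n - c) = X s (s - c)" for s c
    using per[of s "s - c"] by (simp add: algebra_simps)
  have U: "(\<Sum>k<n. \<Sum>d\<in>{1..int M}. sigma X (1 + int k) (1 + int k + d))
      = (\<Sum>k<n. \<Sum>d\<in>{1..int M}. (nat d * (nat d + 1) div 2) * X (1 + int k) (1 + int k + d))"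
  proof -
    have "(\<Sum>k<n. \<Sum>d\<in>{1..int M}. sigma X (1 + int k) (1 + int k + d))
       = (\<Sum>k<n. \<Sum>d\<in>{1..int M}. \<Sum>e\<le>M. \<Sum>c\<in>{1..int M}.
            (if d \<le> c - int e then (\<lambda>s c. X s (s + c)) (1 + int k + - int e) c else 0))"
      by (intro sum.cong refl) (simp add: sig_up[OF band] cong: if_cong)
    also have "\<dots> = (\<Sum>k<n. \<Sum>c\<in>{1..int M}. (nat c * (nat c + 1) div 2) * (\<lambda>s c. X s (s + c)) (1 + int k) c)"
      by (rule core) (simp add: perU)
    finally show ?thesis by simp
  qed
  have L: "(\<Sum>k<n. \<Sum>d\<in>{1..int M}. sigma X (1 + int k) (1 + int k - d))
      = (\<Sum>k<n. \<Sum>d\<in>{1..int M}. (nat d * (nat d + 1) div 2) * X (1 + int k) (1 + int k - d))"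
  proof -
    have "(\<Sum>k<n. \<Sum>d\<in>{1..int M}. sigma X (1 + int k) (1 + int k - d))
       = (\<Sum>k<n. \<Sum>d\<in>{1..int M}. \<Sum>e\<le>M. \<Sum>c\<in>{1..int M}.
            (if d \<le> c - int e then (\<lambda>s c. X s (s - c)) (1 + int k + int e) c else 0))"
      by (intro sum.cong refl) (simp add: sig_lo[OF band] cong: if_cong)
    also have "\<dots> = (\<Sum>k<n. \<Sum>c\<in>{1..int M}. (nat c * (nat c + 1) div 2) * (\<lambda>s c. X s (s - c)) (1 + int k) c)"
      by (rule core) (simp add: perL)
    finally show ?thesis by simp
  qed
  have T1: "fsum (\<lambda>(i, j). (nat (j - i) * (nat (j - i) + 1) div 2) * X i j)
          {(i, j). 1 \<le> i \<and> i \<le> int n \<and> i < j}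
      = (\<Sum>k<n. \<Sum>d\<in>{1..int M}. (nat d * (nat d + 1) div 2) * X (1 + int k) (1 + int k + d))"
    using fsum_up[of "\<lambda>i j. (nat (j - i) * (nat (j - i) + 1) div 2) * X i j" M n] band by fastforce
  have T2: "fsum (\<lambda>(i, j). (nat (i - j) * (nat (i - j) + 1) div 2) * X i j)
          {(i, j). 1 \<le> i \<and> i \<le> int n \<and> i > j}
      = (\<Sum>k<n. \<Sum>d\<in>{1..int M}. (nat d * (nat d + 1) div 2) * X (1 + int k) (1 + int k - d))"
    using fsum_lo[of "\<lambda>i j. (nat (i - j) * (nat (i - j) + 1) div 2) * X i j" M n] band by fastforce
  show "tnorm n X = (\<Sum>k<n. \<Sum>d\<in>{1..int M}. sigma X (1 + int k) (1 + int k + d))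
                   + (\<Sum>k<n. \<Sum>d\<in>{1..int M}. sigma X (1 + int k) (1 + int k - d))"
    unfolding tnorm_def T1 T2 U L ..
  have S1: "fsum (\<lambda>(i, j). sigma X i j) {(i, j). 1 \<le> i \<and> i \<le> int n \<and> i < j}
     = (\<Sum>k<n. \<Sum>d\<in>{1..int M}. sigma X (1 + int k) (1 + int k + d))"
    by (rule fsum_up) (rule sig_band_up[OF band])
  have S2: "fsum (\<lambda>(i, j). sigma X i j) {(i, j). 1 \<le> i \<and> i \<le> int n \<and> i > j}
     = (\<Sum>k<n. \<Sum>d\<in>{1..int M}. sigma X (1 + int k) (1 + int k - d))"
    by (rule fsum_lo) (rule sig_band_lo[OF band])
  show "fsum (\<lambda>(i, j). sigma X i j) {(i, j). 1 \<le> i \<and> i \<le> int n \<and> i < j}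
            + fsum (\<lambda>(i, j). sigma X i j) {(i, j). 1 \<le> i \<and> i \<le> int n \<and> i > j}
         = (\<Sum>k<n. \<Sum>d\<in>{1..int M}. sigma X (1 + int k) (1 + int k + d))
                   + (\<Sum>k<n. \<Sum>d\<in>{1..int M}. sigma X (1 + int k) (1 + int k - d))"
    unfolding S1 S2 ..
qed


lemma sig_per_up:
  assumes th: "X \<in> Theta n" and band: "\<And>i j. X i j \<noteq> 0 \<Longrightarrow> \<bar>j - i\<bar> \<le> int M" and d: "1 \<le> d"
  shows "sigma X (i + q * int n) (i + q * int n + d) = sigma X i (i + d)"
proof -
  have e1: "sigma X (i + q * int n) (i + q * int n + d) = (\<Sum>e\<le>M. \<Sum>c\<in>{1..int M}.
            if d \<le> c - int e then X (i + q * int n - int e) (i + q * int n - int e + c) else 0)"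
    by (rule sig_up[OF band d])
  have e2: "sigma X i (i + d) = (\<Sum>e\<le>M. \<Sum>c\<in>{1..int M}.
            if d \<le> c - int e then X (i - int e) (i - int e + c) else 0)"
    by (rule sig_up[OF band d])
  show ?thesis unfolding e1 e2
  proof (intro sum.cong refl)
    fix e c
    show "(if d \<le> c - int e then X (i + q * int n - int e) (i + q * int n - int e + c) else 0) =
          (if d \<le> c - int e then X (i - int e) (i - int e + c) else 0)"
      using per_mult[OF th, of "i - int e" q "i - int e + c"] by (simp add: algebra_simps)
  qed
qed

lemma sig_per_lo:
  assumes th: "X \<in> Theta n" and band: "\<And>i j. X i j \<noteq> 0 \<Longrightarrow> \<bar>j - i\<bar> \<le> int M" and d: "1 \<le> d"
  shows "sigma X (i + q * int n) (i + q * int n - d) = sigma X i (i - d)"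
proof -
  have e1: "sigma X (i + q * int n) (i + q * int n - d) = (\<Sum>e\<le>M. \<Sum>c\<in>{1..int M}.
            if d \<le> c - int e then X (i + q * int n + int e) (i + q * int n + int e - c) else 0)"
    by (rule sig_lo[OF band d])
  have e2: "sigma X i (i - d) = (\<Sum>e\<le>M. \<Sum>c\<in>{1..int M}.
            if d \<le> c - int e then X (i + int e) (i + int e - c) else 0)"
    by (rule sig_lo[OF band d])
  show ?thesis unfolding e1 e2
  proof (intro sum.cong refl)
    fix e c
    show "(if d \<le> c - int e then X (i + q * int n + int e) (i + q * int n + int e - c) else 0) =
          (if d \<le> c - int e then X (i + int e) (i + int e - c) else 0)"
      using per_mult[OF th, of "i + int e" q "i + int e - c"] by (simp add: algebra_simps)
  qed
qed

lemma strict_sum2: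
  fixes f g :: "nat \<Rightarrow> int \<Rightarrow> nat"
  assumes le: "\<And>k d. d \<in> D \<Longrightarrow> f k d \<le> g k d" and k0: "k0 < n" and d0: "d0 \<in> D" and fin: "finite D"
    and lt: "f k0 d0 < g k0 d0"
  shows "(\<Sum>k<n. \<Sum>d\<in>D. f k d) < (\<Sum>k<n. \<Sum>d\<in>D. g k d)"
proof (rule sum_strict_mono_ex1)
  show "\<forall>k\<in>{..<n}. (\<Sum>d\<in>D. f k d) \<le> (\<Sum>d\<in>D. g k d)" using le by (simp add: sum_mono)
  show "\<exists>k\<in>{..<n}. (\<Sum>d\<in>D. f k d) < (\<Sum>d\<in>D. g k d)"
    using k0 sum_strict_mono_ex1[OF fin, of "f k0" "g k0"] le d0 lt by auto
qed auto

theorem lemma3p7p6: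
  fixes n :: nat
  assumes "n \<ge> 1"
  shows "(\<forall>A \<in> Theta n.
            tnorm n A =
              fsum (\<lambda>(i, j). sigma A i j) {(i, j). 1 \<le> i \<and> i \<le> int n \<and> i < j}
            + fsum (\<lambda>(i, j). sigma A i j) {(i, j). 1 \<le> i \<and> i \<le> int n \<and> i > j})
       \<and> (\<forall>A \<in> Theta n. \<forall>B \<in> Theta n. prec A B \<longrightarrow> tnorm n A < tnorm n B)"
proof (intro conjI ballI impI)
  fix A assume A: "A \<in> Theta n"
  obtain M where "\<forall>i j. A i j \<noteq> 0 \<longrightarrow> \<bar>j - i\<bar> \<le> int M" using band_exists[OF A assms] by blast
  then have band: "\<And>i j. A i j \<noteq> 0 \<Longrightarrow> \<bar>j - i\<bar> \<le> int M" by blast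
  show "tnorm n A =
              fsum (\<lambda>(i, j). sigma A i j) {(i, j). 1 \<le> i \<and> i \<le> int n \<and> i < j}
            + fsum (\<lambda>(i, j). sigma A i j) {(i, j). 1 \<le> i \<and> i \<le> int n \<and> i > j}"
    by (rule trans[OF form(1)[OF A band] form(2)[OF A band, symmetric]])
next
  fix A B assume A: "A \<in> Theta n" and B: "B \<in> Theta n" and p: "prec A B"
  obtain MA where "\<forall>i j. A i j \<noteq> 0 \<longrightarrow> \<bar>j - i\<bar> \<le> int MA" using band_exists[OF A assms] by blast
  obtain MB where "\<forall>i j. B i j \<noteq> 0 \<longrightarrow> \<bar>j - i\<bar> \<le> int MB" using band_exists[OF B assms] by blast
  define M where "M = max MA MB"
  have bA: "\<And>i j. A i j \<noteq> 0 \<Longrightarrow> \<bar>j - i\<bar> \<le> int M"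
    using \<open>\<forall>i j. A i j \<noteq> 0 \<longrightarrow> \<bar>j - i\<bar> \<le> int MA\<close> unfolding M_def by fastforce
  have bB: "\<And>i j. B i j \<noteq> 0 \<Longrightarrow> \<bar>j - i\<bar> \<le> int M"
    using \<open>\<forall>i j. B i j \<noteq> 0 \<longrightarrow> \<bar>j - i\<bar> \<le> int MB\<close> unfolding M_def by fastforce
  have le: "\<And>i j. i \<noteq> j \<Longrightarrow> sigma A i j \<le> sigma B i j" using p by (simp add: prec_def preceq_def)
  obtain i0 j0 where ij: "i0 \<noteq> j0" "sigma A i0 j0 < sigma B i0 j0" using p by (auto simp: prec_def)
  define q where "q = (i0 - 1) div int n"
  define k0 where "k0 = nat ((i0 - 1) mod int n)"
  have k0: "k0 < n" unfolding k0_def using assms by (simp add: nat_less_iff)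
  have i0: "i0 = (1 + int k0) + q * int n" unfolding k0_def q_def using assms
    by (simp add: algebra_simps)
  have leU: "\<And>k d. (if d \<in> {1..int M} then sigma A (1 + int k) (1 + int k + d) else 0)
                 \<le> (if d \<in> {1..int M} then sigma B (1 + int k) (1 + int k + d) else 0)"
    using le by auto
  have leL: "\<And>k d. (if d \<in> {1..int M} then sigma A (1 + int k) (1 + int k - d) else 0)
                 \<le> (if d \<in> {1..int M} then sigma B (1 + int k) (1 + int k - d) else 0)"
    using le by auto
  have U: "(\<Sum>k<n. \<Sum>d\<in>{1..int M}. sigma A (1 + int k) (1 + int k + d))
        \<le> (\<Sum>k<n. \<Sum>d\<in>{1..int M}. sigma B (1 + int k) (1 + int k + d))"
    using le by (intro sum_mono) auto
  have L: "(\<Sum>k<n. \<Sum>d\<in>{1..int M}. sigma A (1 + int k) (1 + int k - d))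
        \<le> (\<Sum>k<n. \<Sum>d\<in>{1..int M}. sigma B (1 + int k) (1 + int k - d))"
    using le by (intro sum_mono) auto
  show "tnorm n A < tnorm n B"
  proof (cases "i0 < j0")
    case True
    define d0 where "d0 = j0 - i0"
    have d0: "1 \<le> d0" using True d0_def by simp
    have "d0 \<le> int M" using sig_band_up[OF bB True] ij(2) d0_def by simp
    have j0: "j0 = i0 + d0" using d0_def by simp
    have "sigma A (1 + int k0) (1 + int k0 + d0) < sigma B (1 + int k0) (1 + int k0 + d0)"
      using ij(2) sig_per_up[OF A bA d0, of "1 + int k0" q] sig_per_up[OF B bB d0, of "1 + int k0" q]
      unfolding j0 by (simp add: i0[symmetric])
    hence "(\<Sum>k<n. \<Sum>d\<in>{1..int M}. sigma A (1 + int k) (1 + int k + d))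
        < (\<Sum>k<n. \<Sum>d\<in>{1..int M}. sigma B (1 + int k) (1 + int k + d))"
      by (intro strict_sum2[where f="\<lambda>k d. sigma A (1 + int k) (1 + int k + d)" and g="\<lambda>k d. sigma B (1 + int k) (1 + int k + d)"])
         (use le k0 d0 \<open>d0 \<le> int M\<close> in auto)
    then show ?thesis using form(1)[OF A bA] form(1)[OF B bB] L by linarith
  next
    case False
    hence F: "j0 < i0" using ij(1) by simp
    define d0 where "d0 = i0 - j0"
    have d0: "1 \<le> d0" using F d0_def by simp
    have "d0 \<le> int M" using sig_band_lo[OF bB F] ij(2) d0_def by simp
    have j0: "j0 = i0 - d0" using d0_def by simp
    have "sigma A (1 + int k0) (1 + int k0 - d0) < sigma B (1 + int k0) (1 + int k0 - d0)"
      using ij(2) sig_per_lo[OF A bA d0, of "1 + int k0" q] sig_per_lo[OF B bB d0, of "1 + int k0" q]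
      unfolding j0 by (simp add: i0[symmetric])
    hence "(\<Sum>k<n. \<Sum>d\<in>{1..int M}. sigma A (1 + int k) (1 + int k - d))
        < (\<Sum>k<n. \<Sum>d\<in>{1..int M}. sigma B (1 + int k) (1 + int k - d))"
      by (intro strict_sum2[where f="\<lambda>k d. sigma A (1 + int k) (1 + int k - d)" and g="\<lambda>k d. sigma B (1 + int k) (1 + int k - d)"])
         (use le k0 d0 \<open>d0 \<le> int M\<close> in auto)
    then show ?thesis using form(1)[OF A bA] form(1)[OF B bB] U by linarith
  qed
qed

end
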